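(* Let $G=(V,E)$ be a network, $s,t\in V$, and $B\ge 0$ a CO-weight bound. There is an optimal solution $(\pi_1,\pi_2)$ of the CO-Constrained QoS Max-Survivability problem with bound $B$ such that all its disjoint segments are shortest disjoint segments.
   Context: A network is a directed graph $G=(V,E)$. Each link $e$ has failure probability $p_e\in(0,p_{max}]$ with $p_{max}<1$, and positive weight $w_e$. Paths are identified with link sets. A survivable connection is a pair $(\pi_1,\pi_2)$ of simple $s$–$t$ paths; the two paths may coincide. Its survivability level is $\prod_{e\in\pi_1\cap\pi_2}(1-p_e)$, equal to $1$ if empty. Its CO-weight is $\sum_{e\in\pi_1\cup\pi_2}w_e$. CO-CQMS problem: maximize survivability level subject to CO-weight $\le B$. A survivable connection is viewed as a concatenation of alternating segments: - common segments consist of links common to $\pi_1$ and $\pi_2$; - disjoint segments consist of links exclusive to one of the paths. A disjoint segment with head node $u$ and tail node $v$ is the pair formed by the subpath of $\pi_1$ from $u$ to $v$ and the subpath of $\pi_2$ from $u$ to $v$, which are link-disjoint. The weight of a disjoint segment is the total weight of its links. It is a shortest disjoint segment if its weight is minimum among all pairs of link-disjoint paths from $u$ to $v$ in $G$. *)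

theory Defs
  imports Complex_Main
begin

definition links :: "'v list \<Rightarrow> ('v \<times> 'v) set" where
  "links p = set (zip p (tl p))"

definition simple_path :: "('v \<times> 'v) set \<Rightarrow> 'v \<Rightarrow> 'v \<Rightarrow> 'v list \<Rightarrow> bool" where
  "simple_path E u v p \<longleftrightarrow> p \<noteq> [] \<and> hd p = u \<and> last p = v \<and> distinct p \<and> links p \<subseteq> E"

definition surv_level :: "('v \<times> 'v \<Rightarrow> real) \<Rightarrow> 'v list \<Rightarrow> 'v list \<Rightarrow> real" where
  "surv_level pf \<pi>1 \<pi>2 = (\<Prod>e\<in>links \<pi>1 \<inter> links \<pi>2. 1 - pf e)"

definition co_weight :: "('v \<times> 'v \<Rightarrow> real) \<Rightarrow> 'v list \<Rightarrow> 'v list \<Rightarrow> real" where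
  "co_weight w \<pi>1 \<pi>2 = (\<Sum>e\<in>links \<pi>1 \<union> links \<pi>2. w e)"

definition feasible_conn ::
  "('v \<times> 'v) set \<Rightarrow> ('v \<times> 'v \<Rightarrow> real) \<Rightarrow> real \<Rightarrow> 'v \<Rightarrow> 'v \<Rightarrow> 'v list \<Rightarrow> 'v list \<Rightarrow> bool" where
  "feasible_conn E w B s t \<pi>1 \<pi>2 \<longleftrightarrow>
     simple_path E s t \<pi>1 \<and> simple_path E s t \<pi>2 \<and> co_weight w \<pi>1 \<pi>2 \<le> B"

definition optimal_conn ::
  "('v \<times> 'v) set \<Rightarrow> ('v \<times> 'v \<Rightarrow> real) \<Rightarrow> ('v \<times> 'v \<Rightarrow> real) \<Rightarrow> real \<Rightarrow> 'v \<Rightarrow> 'v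
    \<Rightarrow> 'v list \<Rightarrow> 'v list \<Rightarrow> bool" where
  "optimal_conn E pf w B s t \<pi>1 \<pi>2 \<longleftrightarrow>
     feasible_conn E w B s t \<pi>1 \<pi>2 \<and>
     (\<forall>\<sigma>1 \<sigma>2. feasible_conn E w B s t \<sigma>1 \<sigma>2 \<longrightarrow> surv_level pf \<sigma>1 \<sigma>2 \<le> surv_level pf \<pi>1 \<pi>2)"

text \<open>Subpath of a vertex list between positions i and j (inclusive).\<close>
definition subpath :: "'v list \<Rightarrow> nat \<Rightarrow> nat \<Rightarrow> 'v list" where
  "subpath p i j = take (Suc j - i) (drop i p)"

definition excl_run :: "'v list \<Rightarrow> 'v list \<Rightarrow> nat \<Rightarrow> nat \<Rightarrow> bool" where
  "excl_run p q i j \<longleftrightarrow> i < j \<and> j < length p \<and>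
     (\<forall>k. i \<le> k \<and> k < j \<longrightarrow> (p ! k, p ! Suc k) \<notin> links q) \<and>
     (i = 0 \<or> (p ! (i - 1), p ! i) \<in> links q) \<and>
     (j = length p - 1 \<or> (p ! j, p ! Suc j) \<in> links q)"

text \<open>A disjoint segment of (\<pi>1,\<pi>2): a maximal run of links exclusive to \<pi>1 and a
  maximal run of links exclusive to \<pi>2, both from the same head u to the same tail v.\<close>
definition disjoint_segment :: "'v list \<Rightarrow> 'v list \<Rightarrow> 'v list \<Rightarrow> 'v list \<Rightarrow> bool" where
  "disjoint_segment \<pi>1 \<pi>2 \<sigma>1 \<sigma>2 \<longleftrightarrow>
     (\<exists>i1 j1 i2 j2. excl_run \<pi>1 \<pi>2 i1 j1 \<and> excl_run \<pi>2 \<pi>1 i2 j2 \<and>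
        \<sigma>1 = subpath \<pi>1 i1 j1 \<and> \<sigma>2 = subpath \<pi>2 i2 j2 \<and>
        hd \<sigma>1 = hd \<sigma>2 \<and> last \<sigma>1 = last \<sigma>2)"

definition pair_weight :: "('v \<times> 'v \<Rightarrow> real) \<Rightarrow> 'v list \<Rightarrow> 'v list \<Rightarrow> real" where
  "pair_weight w \<rho>1 \<rho>2 = (\<Sum>e\<in>links \<rho>1 \<union> links \<rho>2. w e)"

definition shortest_disjoint_segment ::
  "('v \<times> 'v) set \<Rightarrow> ('v \<times> 'v \<Rightarrow> real) \<Rightarrow> 'v list \<Rightarrow> 'v list \<Rightarrow> bool" where
  "shortest_disjoint_segment E w \<sigma>1 \<sigma>2 \<longleftrightarrow>
     (\<forall>\<rho>1 \<rho>2. simple_path E (hd \<sigma>1) (last \<sigma>1) \<rho>1 \<and> simple_path E (hd \<sigma>1) (last \<sigma>1) \<rho>2 \<and>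
        links \<rho>1 \<inter> links \<rho>2 = {} \<longrightarrow> pair_weight w \<sigma>1 \<sigma>2 \<le> pair_weight w \<rho>1 \<rho>2)"

end

theory Submission
  imports Defs "HOL-Library.Multiset"
begin


definition lk :: "'v list \<Rightarrow> ('v \<times> 'v) list" where
  "lk p = zip p (tl p)"

lemma links_lk: "links p = set (lk p)" by (simp add: links_def lk_def)

lemma lk_Nil[simp]: "lk [] = []" and lk_single[simp]: "lk [x] = []"
  and lk_cons2[simp]: "lk (x # y # ys) = (x, y) # lk (y # ys)"
  by (simp_all add: lk_def)

lemma links_nth: "e \<in> links p \<longleftrightarrow> (\<exists>k. Suc k < length p \<and> e = (p ! k, p ! Suc k))"
proof
  assume "e \<in> links p"
  then obtain n where "p ! n = fst e" "tl p ! n = snd e" "n < length p" "n < length (tl p)"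
    unfolding links_def in_set_zip by blast
  then show "\<exists>k. Suc k < length p \<and> e = (p ! k, p ! Suc k)"
    by (intro exI[of _ n]) (auto simp: nth_tl prod_eq_iff)
next
  assume "\<exists>k. Suc k < length p \<and> e = (p ! k, p ! Suc k)"
  then obtain k where "Suc k < length p" "e = (p ! k, p ! Suc k)" by blast
  then show "e \<in> links p" unfolding links_def in_set_zip
    by (intro exI[of _ k]) (auto simp: nth_tl)
qed

lemma links_nthI: "Suc k < length p \<Longrightarrow> (p ! k, p ! Suc k) \<in> links p"
  using links_nth by blast

lemma lk_snoc: "p \<noteq> [] \<Longrightarrow> lk (p @ [z]) = lk p @ [(last p, z)]"
  by (induction p rule: induct_list012) auto

lemma links_snoc: "p \<noteq> [] \<Longrightarrow> links (p @ [z]) = insert (last p, z) (links p)"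
  by (auto simp: links_lk lk_snoc)

lemma step_cross:
  "\<not> P (a::nat) \<Longrightarrow> P b \<Longrightarrow> a \<le> b \<Longrightarrow> \<exists>k. a \<le> k \<and> k < b \<and> \<not> P k \<and> P (Suc k)"
proof (induction b)
  case 0 then show ?case by auto
next
  case (Suc b)
  show ?case
  proof (cases "a \<le> b")
    case True
    show ?thesis
    proof (cases "P b")
      case True with Suc \<open>a \<le> b\<close> show ?thesis by (meson less_Suc_eq)
    next
      case False with Suc \<open>a \<le> b\<close> show ?thesis by auto
    qed
  next
    case False
    then have "a = Suc b" using Suc by auto
    with Suc show ?thesis by auto
  qed
qed

lemma leave_link:
  assumes "p \<noteq> []" "hd p \<in> S" "last p \<notin> S"
  shows "\<exists>e\<in>links p. fst e \<in> S \<and> snd e \<notin> S"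
proof -
  have "\<not> (p ! 0 \<notin> S)" "p ! (length p - 1) \<notin> S"
    using assms by (auto simp: hd_conv_nth last_conv_nth)
  from step_cross[of "\<lambda>k. p ! k \<notin> S", OF this] obtain k where
    "k < length p - 1" "p ! k \<in> S" "p ! Suc k \<notin> S" by auto
  then show ?thesis using links_nthI[of k p] by force
qed

lemma enter_aux:
  assumes "Suc i < length p" "Suc j < length p" "i < j"
    "p ! Suc i \<notin> S" "p ! j \<in> S"
  shows "\<exists>x\<in>links p. fst x \<notin> S \<and> snd x \<in> S"
proof -
  from step_cross[of "\<lambda>k. p ! k \<in> S" "Suc i" j] assms obtain k where
    "Suc i \<le> k" "k < j" "p ! k \<notin> S" "p ! Suc k \<in> S" by auto
  then show ?thesis using links_nthI[of k p] assms by force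
qed

lemma enter_between:
  assumes "e \<in> links p" "e' \<in> links p" "e \<noteq> e'"
    "fst e \<in> S" "snd e \<notin> S" "fst e' \<in> S" "snd e' \<notin> S"
  shows "\<exists>x\<in>links p. fst x \<notin> S \<and> snd x \<in> S"
proof -
  obtain i where i: "Suc i < length p" "e = (p ! i, p ! Suc i)" using assms links_nth by metis
  obtain j where j: "Suc j < length p" "e' = (p ! j, p ! Suc j)" using assms links_nth by metis
  have "i \<noteq> j" using i j assms by auto
  then consider "i < j" | "j < i" by linarith
  then show ?thesis
  proof cases
    case 1 then show ?thesis using enter_aux[of i p j S] i j assms by auto
  next
    case 2 then show ?thesis using enter_aux[of j p i S] i j assms by auto
  qed
qed

lemma links_take_sub: "links (take n p) \<subseteq> links p"
proof
  fix e assume "e \<in> links (take n p)"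
  then obtain k where "Suc k < length (take n p)" "e = (take n p ! k, take n p ! Suc k)"
    using links_nth by metis
  then show "e \<in> links p" using links_nthI[of k p] by auto
qed

lemma rtranclp_path:
  assumes "r\<^sup>*\<^sup>* a b"
  shows "\<exists>p. p \<noteq> [] \<and> hd p = a \<and> last p = b \<and> distinct p \<and> (\<forall>e\<in>links p. r (fst e) (snd e))"
  using assms
proof (induction rule: rtranclp_induct)
  case base
  then show ?case by (rule exI[of _ "[a]"]) (simp add: links_def)
next
  case (step y z)
  then obtain p where p: "p \<noteq> []" "hd p = a" "last p = y" "distinct p" "\<forall>e\<in>links p. r (fst e) (snd e)"
    by auto
  show ?case
  proof (cases "z \<in> set p")
    case True
    then obtain i where i: "i < length p" "p ! i = z" by (auto simp: in_set_conv_nth)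
    let ?q = "take (Suc i) p"
    have "?q \<noteq> []" using p by simp
    moreover have "hd ?q = a" using p by simp
    moreover have "last ?q = z" using i by (subst last_conv_nth) (auto simp: min_def intro!: arg_cong[where f="(!) p"])
    moreover have "distinct ?q" using p by simp
    moreover have "\<forall>e\<in>links ?q. r (fst e) (snd e)" using p links_take_sub by blast
    ultimately show ?thesis by blast
  next
    case False
    let ?q = "p @ [z]"
    have "?q \<noteq> []" "hd ?q = a" "last ?q = z" "distinct ?q" using p False by auto
    moreover have "\<forall>e\<in>links ?q. r (fst e) (snd e)" using p step by (simp add: links_snoc)
    ultimately show ?thesis by blast
  qed
qed

lemma walk_rtranclp:
  "p \<noteq> [] \<Longrightarrow> (\<forall>e\<in>links p. r (fst e) (snd e)) \<Longrightarrow> r\<^sup>*\<^sup>* (hd p) (last p)"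
proof (induction p rule: induct_list012)
  case (3 x y zs)
  then have "r x y" "r\<^sup>*\<^sup>* y (last (y # zs))" by (auto simp: links_lk)
  then show ?case by (simp add: converse_rtranclp_into_rtranclp)
qed auto


definition outd :: "('v \<times> 'v) multiset \<Rightarrow> 'v \<Rightarrow> nat" where
  "outd M v = size (filter_mset (\<lambda>e. fst e = v) M)"
definition ind :: "('v \<times> 'v) multiset \<Rightarrow> 'v \<Rightarrow> nat" where
  "ind M v = size (filter_mset (\<lambda>e. snd e = v) M)"

lemma size_filter_mset_mset: "size (filter_mset P (mset xs)) = length (filter P xs)"
  by (metis mset_filter size_mset)

lemma sum_size_filter:
  assumes "finite R"
  shows "(\<Sum>v\<in>R. size (filter_mset (\<lambda>e. f e = v) M)) = size (filter_mset (\<lambda>e. f e \<in> R) M)"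
proof (induction M)
  case empty then show ?case by simp
next
  case (add x M)
  have "(\<Sum>v\<in>R. size (filter_mset (\<lambda>e. f e = v) (add_mset x M)))
      = (\<Sum>v\<in>R. (if f x = v then 1 else 0) + size (filter_mset (\<lambda>e. f e = v) M))"
    by (intro sum.cong) auto
  also have "\<dots> = (\<Sum>v\<in>R. (if f x = v then 1 else 0)) + (\<Sum>v\<in>R. size (filter_mset (\<lambda>e. f e = v) M))"
    by (simp add: sum.distrib)
  also have "(\<Sum>v\<in>R. (if f x = v then 1 else 0)) = (if f x \<in> R then 1 else (0::nat))"
    using assms by (simp add: sum.delta)
  finally show ?case using add by simp
qed

lemma path_balance:
  "p \<noteq> [] \<Longrightarrow> length (filter (\<lambda>e. fst e = v) (lk p)) + (if v = last p then 1 else 0)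
     = length (filter (\<lambda>e. snd e = v) (lk p)) + (if v = hd p then 1 else 0)"
proof (induction p rule: induct_list012)
  case (3 x y zs)
  have IH: "length (filter (\<lambda>e. fst e = v) (lk (y # zs))) + (if v = last (y # zs) then 1 else 0)
     = length (filter (\<lambda>e. snd e = v) (lk (y # zs))) + (if v = y then 1 else 0)" using 3 by simp
  show ?case using IH by (simp only: lk_cons2 filter.simps list.sel last.simps list.simps if_True if_False) (cases "x = v"; cases "y = v"; simp)
qed auto

lemma split_fwd_bwd:
  "length (filter (\<lambda>e. fst e = v) L) = length (filter (\<lambda>e. fst e = v) (filter \<phi> L))
     + length (filter (\<lambda>e. snd e = v) (map prod.swap (filter (\<lambda>e. \<not> \<phi> e) L)))"
  "length (filter (\<lambda>e. snd e = v) L) = length (filter (\<lambda>e. snd e = v) (filter \<phi> L))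
     + length (filter (\<lambda>e. fst e = v) (map prod.swap (filter (\<lambda>e. \<not> \<phi> e) L)))"
  by (induction L) auto

lemma extract_path:
  assumes bal: "\<forall>v. outd M v + (if v = t then k else 0) = ind M v + (if v = s then k else 0)"
    and "0 < k" "s \<noteq> t"
  shows "\<exists>p. p \<noteq> [] \<and> hd p = s \<and> last p = t \<and> distinct p \<and> links p \<subseteq> set_mset M"
proof -
  define r where "r = (\<lambda>a b. (a, b) \<in># M)"
  define R where "R = {v. r\<^sup>*\<^sup>* s v}"
  have Rsub: "R \<subseteq> insert s (snd ` set_mset M)"
  proof
    fix v assume "v \<in> R"
    then have "r\<^sup>*\<^sup>* s v" by (simp add: R_def)
    then show "v \<in> insert s (snd ` set_mset M)"
    proof (induction rule: rtranclp_induct)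
      case (step y z)
      then have "(y, z) \<in># M" by (simp add: r_def)
      then show ?case using rev_image_eqI[of "(y, z)" "set_mset M" z snd] by simp
    qed simp
  qed
  have finR: "finite R" using Rsub finite_subset by blast
  have sR: "s \<in> R" by (simp add: R_def)
  have "t \<in> R"
  proof (rule ccontr)
    assume tR: "t \<notin> R"
    have "(\<Sum>v\<in>R. outd M v + (if v = t then k else 0)) = (\<Sum>v\<in>R. ind M v + (if v = s then k else 0))"
      using bal by simp
    then have eq: "size (filter_mset (\<lambda>e. fst e \<in> R) M) = size (filter_mset (\<lambda>e. snd e \<in> R) M) + k"
      using tR sR finR by (simp add: sum.distrib outd_def ind_def sum_size_filter sum.delta')
    have "filter_mset (\<lambda>e. fst e \<in> R) M \<subseteq># filter_mset (\<lambda>e. snd e \<in> R) M"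
    proof (rule mset_subset_eqI)
      fix e
      show "count (filter_mset (\<lambda>e. fst e \<in> R) M) e \<le> count (filter_mset (\<lambda>e. snd e \<in> R) M) e"
      proof (cases "fst e \<in> R \<and> e \<in># M")
        case True
        then have "r\<^sup>*\<^sup>* s (snd e)" unfolding R_def r_def
          by (cases e) (auto intro: rtranclp.rtrancl_into_rtrancl)
        then show ?thesis by (simp add: R_def)
      next
        case False then show ?thesis by (auto simp: not_in_iff)
      qed
    qed
    from size_mset_mono[OF this] eq \<open>0 < k\<close> show False by simp
  qed
  then have "r\<^sup>*\<^sup>* s t" by (simp add: R_def)
  from rtranclp_path[OF this] show ?thesis by (auto simp: r_def)
qed

lemma distinct_lk: "distinct p \<Longrightarrow> distinct (lk p)"
  by (simp add: lk_def distinct_zipI1)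

lemma count_distinct_le1: "distinct xs \<Longrightarrow> count (mset xs) x \<le> 1"
  by (simp add: distinct_count_atmost_1)

lemma mset_distinct_sub: "distinct xs \<Longrightarrow> set xs \<subseteq> set_mset M \<Longrightarrow> mset xs \<subseteq># M"
proof (rule mset_subset_eqI)
  fix x assume "distinct xs" "set xs \<subseteq> set_mset M"
  then show "count (mset xs) x \<le> count M x"
    by (auto simp: distinct_count_atmost_1 count_eq_zero_iff[symmetric])
qed

lemma outd_mset: "outd (mset L) v = length (filter (\<lambda>e. fst e = v) L)"
  and ind_mset: "ind (mset L) v = length (filter (\<lambda>e. snd e = v) L)"
  by (simp_all add: outd_def ind_def size_filter_mset_mset)

lemma outd_plus: "outd (A + B) v = outd A v + outd B v"
  and ind_plus: "ind (A + B) v = ind A v + ind B v"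
  by (simp_all add: outd_def ind_def)

lemma outd_minus: "B \<subseteq># A \<Longrightarrow> outd (A - B) v = outd A v - outd B v"
  and ind_minus: "B \<subseteq># A \<Longrightarrow> ind (A - B) v = ind A v - ind B v"
  by (simp_all add: outd_def ind_def size_Diff_submset multiset_filter_mono)

lemma outd_le: "B \<subseteq># A \<Longrightarrow> outd B v \<le> outd A v"
  and ind_le: "B \<subseteq># A \<Longrightarrow> ind B v \<le> ind A v"
  by (simp_all add: outd_def ind_def size_mset_mono multiset_filter_mono)

lemma decomp2:
  assumes bal: "\<forall>v. outd M v + (if v = t then 2 else 0) = ind M v + (if v = s then 2 else 0)"
    and "s \<noteq> t"
  shows "\<exists>p1 p2. p1 \<noteq> [] \<and> hd p1 = s \<and> last p1 = t \<and> distinct p1 \<and> links p1 \<subseteq> set_mset M \<and>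
    p2 \<noteq> [] \<and> hd p2 = s \<and> last p2 = t \<and> distinct p2 \<and> links p2 \<subseteq> set_mset M \<and>
    (\<forall>e\<in>links p1 \<inter> links p2. 2 \<le> count M e)"
proof -
  obtain p1 where p1: "p1 \<noteq> []" "hd p1 = s" "last p1 = t" "distinct p1" "links p1 \<subseteq> set_mset M"
    using extract_path[OF bal _ \<open>s \<noteq> t\<close>] by auto
  let ?P = "mset (lk p1)"
  have sub: "?P \<subseteq># M" using p1 by (simp add: mset_distinct_sub distinct_lk links_lk)
  define M' where "M' = M - ?P"
  have bal': "\<forall>v. outd M' v + (if v = t then 1 else 0) = ind M' v + (if v = s then 1 else 0)"
  proof
    fix v
    have a: "outd ?P v + (if v = t then 1 else 0) = ind ?P v + (if v = s then 1 else 0)"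
      using path_balance[OF p1(1), of v] p1 by (simp add: outd_mset ind_mset)
    have b: "outd ?P v \<le> outd M v" "ind ?P v \<le> ind M v" using outd_le[OF sub] ind_le[OF sub] by auto
    show "outd M' v + (if v = t then 1 else 0) = ind M' v + (if v = s then 1 else 0)"
      unfolding M'_def using outd_minus[OF sub] ind_minus[OF sub] a b bal[rule_format, of v]
      by (simp split: if_splits)
  qed
  obtain p2 where p2: "p2 \<noteq> []" "hd p2 = s" "last p2 = t" "distinct p2" "links p2 \<subseteq> set_mset M'"
    using extract_path[OF bal' _ \<open>s \<noteq> t\<close>] by auto
  have "links p2 \<subseteq> set_mset M" using p2(5) unfolding M'_def by (auto dest: in_diffD)
  moreover have "\<forall>e\<in>links p1 \<inter> links p2. 2 \<le> count M e"
  proof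
    fix e assume e: "e \<in> links p1 \<inter> links p2"
    have "distinct (lk p1)" using p1 by (simp add: distinct_lk)
    then have "count ?P e = 1" using e unfolding distinct_count_atmost_1 links_lk by (metis IntD1)
    moreover have "1 \<le> count M' e" using e p2 by auto
    moreover have "count M' e = count M e - count ?P e" by (simp add: M'_def)
    ultimately show "2 \<le> count M e" by simp
  qed
  ultimately show ?thesis using p1 p2 by blast
qed


lemma menger2:
  assumes cut: "\<forall>S. s \<in> S \<and> t \<notin> S \<longrightarrow> (\<exists>e\<in>H \<inter> C. fst e \<in> S \<and> snd e \<notin> S) \<or>
      (\<exists>e\<in>H. \<exists>e'\<in>H. e \<noteq> e' \<and> fst e \<in> S \<and> snd e \<notin> S \<and> fst e' \<in> S \<and> snd e' \<notin> S)"
  shows "\<exists>P1 P2. P1 \<noteq> [] \<and> hd P1 = s \<and> last P1 = t \<and> distinct P1 \<and> links P1 \<subseteq> H \<and>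
     P2 \<noteq> [] \<and> hd P2 = s \<and> last P2 = t \<and> distinct P2 \<and> links P2 \<subseteq> H \<and> links P1 \<inter> links P2 \<subseteq> C"
proof (cases "s = t")
  case True
  then show ?thesis by (intro exI[of _ "[s]"]) (simp add: links_def)
next
  case st: False
  define hr where "hr = (\<lambda>a b. (a, b) \<in> H)"
  define S0 where "S0 = {v. hr\<^sup>*\<^sup>* s v}"
  have "t \<in> S0"
  proof (rule ccontr)
    assume "t \<notin> S0"
    moreover have "s \<in> S0" by (simp add: S0_def)
    ultimately obtain e where "e \<in> H" "fst e \<in> S0" "snd e \<notin> S0" using cut by blast
    then show False unfolding S0_def hr_def
      by (cases e) (auto intro: rtranclp.rtrancl_into_rtrancl)
  qed
  then obtain P where P: "P \<noteq> []" "hd P = s" "last P = t" "distinct P" "links P \<subseteq> H"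
    using rtranclp_path[of hr s t] unfolding S0_def hr_def by fastforce
  define fwdok where "fwdok = (\<lambda>a b. (a, b) \<in> H \<and> ((a, b) \<notin> links P \<or> (a, b) \<in> C))"
  define res where "res = (\<lambda>a b. fwdok a b \<or> (b, a) \<in> links P)"
  define S where "S = {v. res\<^sup>*\<^sup>* s v}"
  have "t \<in> S"
  proof (rule ccontr)
    assume tS: "t \<notin> S"
    have sS: "s \<in> S" by (simp add: S_def)
    have clos: "res a b \<Longrightarrow> a \<in> S \<Longrightarrow> b \<in> S" for a b
      unfolding S_def by (auto intro: rtranclp.rtrancl_into_rtrancl)
    have noenter: "\<not> (fst x \<notin> S \<and> snd x \<in> S)" if "x \<in> links P" for x
      using that clos[of "snd x" "fst x"] by (cases x) (auto simp: res_def)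
    have leave: "e \<in> links P \<and> e \<notin> C" if "e \<in> H" "fst e \<in> S" "snd e \<notin> S" for e
      using that clos[of "fst e" "snd e"] by (cases e) (auto simp: res_def fwdok_def)
    from cut sS tS consider (a) e where "e \<in> H \<inter> C" "fst e \<in> S" "snd e \<notin> S"
      | (b) e e' where "e \<in> H" "e' \<in> H" "e \<noteq> e'" "fst e \<in> S" "snd e \<notin> S" "fst e' \<in> S" "snd e' \<notin> S"
      by blast
    then show False
    proof cases
      case a then show ?thesis using leave by blast
    next
      case b
      then have "e \<in> links P" "e' \<in> links P" using leave by auto
      from enter_between[OF this b(3-7)] noenter show ?thesis by blast
    qed
  qed
  then obtain Q where Q: "Q \<noteq> []" "hd Q = s" "last Q = t" "distinct Q" "\<forall>e\<in>links Q. res (fst e) (snd e)"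
    using rtranclp_path[of res s t] unfolding S_def by fastforce
  define \<phi> where "\<phi> = (\<lambda>e. fwdok (fst e) (snd e))"
  define LP where "LP = mset (lk P)"
  define F where "F = mset (filter \<phi> (lk Q))"
  define Bk where "Bk = mset (map prod.swap (filter (\<lambda>e. \<not> \<phi> e) (lk Q)))"
  define M where "M = LP + F - Bk"
  have dQ: "distinct (lk Q)" and dP: "distinct (lk P)" using Q P by (simp_all add: distinct_lk)
  have BkLP: "Bk \<subseteq># LP"
    unfolding Bk_def LP_def
  proof (rule mset_distinct_sub)
    show "distinct (map prod.swap (filter (\<lambda>e. \<not> \<phi> e) (lk Q)))"
      using dQ by (simp add: distinct_map inj_on_def)
    show "set (map prod.swap (filter (\<lambda>e. \<not> \<phi> e) (lk Q))) \<subseteq> set_mset (mset (lk P))"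
      using Q(5) by (auto simp: \<phi>_def res_def links_lk)
  qed
  have BkLPF: "Bk \<subseteq># LP + F" using BkLP by (meson subset_mset.order_trans subset_mset.le_add_same_cancel1 subset_mset.zero_le)
  have bal: "\<forall>v. outd M v + (if v = t then 2 else 0) = ind M v + (if v = s then 2 else 0)"
  proof
    fix v
    have a: "outd LP v + (if v = t then 1 else 0) = ind LP v + (if v = s then 1 else 0)"
      using path_balance[OF P(1), of v] P by (simp add: LP_def outd_mset ind_mset)
    have q: "length (filter (\<lambda>e. fst e = v) (lk Q)) + (if v = t then 1 else 0)
      = length (filter (\<lambda>e. snd e = v) (lk Q)) + (if v = s then 1 else 0)"
      using path_balance[OF Q(1), of v] Q by simp
    have q2: "outd F v + ind Bk v + (if v = t then 1 else 0) = ind F v + outd Bk v + (if v = s then 1 else 0)"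
    proof -
      have f: "outd F v = length (filter (\<lambda>e. fst e = v) (filter \<phi> (lk Q)))"
        "ind F v = length (filter (\<lambda>e. snd e = v) (filter \<phi> (lk Q)))"
        "outd Bk v = length (filter (\<lambda>e. fst e = v) (map prod.swap (filter (\<lambda>e. \<not> \<phi> e) (lk Q))))"
        "ind Bk v = length (filter (\<lambda>e. snd e = v) (map prod.swap (filter (\<lambda>e. \<not> \<phi> e) (lk Q))))"
        unfolding F_def Bk_def by (rule outd_mset ind_mset)+
      show ?thesis using q split_fwd_bwd[of v "lk Q" \<phi>] f by linarith
    qed
    have le: "outd Bk v \<le> outd LP v + outd F v" "ind Bk v \<le> ind LP v + ind F v"
      using outd_le[OF BkLPF] ind_le[OF BkLPF] by (auto simp: outd_plus ind_plus)
    show "outd M v + (if v = t then 2 else 0) = ind M v + (if v = s then 2 else 0)"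
      unfolding M_def using outd_minus[OF BkLPF] ind_minus[OF BkLPF] a q2 le st
      by (simp add: outd_plus ind_plus split: if_splits)
  qed
  obtain P1 P2 where D: "P1 \<noteq> []" "hd P1 = s" "last P1 = t" "distinct P1" "links P1 \<subseteq> set_mset M"
    "P2 \<noteq> []" "hd P2 = s" "last P2 = t" "distinct P2" "links P2 \<subseteq> set_mset M"
    "\<forall>e\<in>links P1 \<inter> links P2. 2 \<le> count M e"
    using decomp2[OF bal st] by blast
  have MH: "set_mset M \<subseteq> H"
  proof
    fix e assume "e \<in># M"
    then have "e \<in># LP + F" unfolding M_def by (rule in_diffD)
    then show "e \<in> H" using P(5) by (auto simp: LP_def F_def links_lk \<phi>_def fwdok_def)
  qed
  have MC: "e \<in> C" if "2 \<le> count M e" for e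
  proof -
    have "count M e \<le> count LP e + count F e" by (simp add: M_def)
    moreover have "count LP e \<le> 1" unfolding LP_def by (rule count_distinct_le1[OF dP])
    moreover have "count F e \<le> 1" unfolding F_def by (rule count_distinct_le1) (simp add: dQ)
    ultimately have "count LP e = 1" "count F e = 1" using that by auto
    then have "e \<in> links P" "\<phi> e" unfolding LP_def F_def links_lk
      by (metis count_eq_zero_iff mset_filter set_mset_mset zero_neq_one, metis count_eq_zero_iff set_filter mem_Collect_eq set_mset_mset zero_neq_one)
    then show "e \<in> C" by (cases e) (auto simp: \<phi>_def fwdok_def)
  qed
  show ?thesis using D MH MC by (intro exI[of _ P1] exI[of _ P2]) auto
qed


lemma subpath_len: "i \<le> j \<Longrightarrow> j < length p \<Longrightarrow> length (subpath p i j) = Suc j - i"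
  by (simp add: subpath_def)

lemma subpath_nth: "i \<le> j \<Longrightarrow> j < length p \<Longrightarrow> k < Suc j - i \<Longrightarrow> subpath p i j ! k = p ! (i + k)"
  by (simp add: subpath_def)

lemma subpath_ne: "i \<le> j \<Longrightarrow> j < length p \<Longrightarrow> subpath p i j \<noteq> []"
  by (simp add: subpath_def)

lemma subpath_hd: "i \<le> j \<Longrightarrow> j < length p \<Longrightarrow> hd (subpath p i j) = p ! i"
  using subpath_nth[of i j p 0] subpath_ne[of i j p] by (simp add: hd_conv_nth)

lemma subpath_last: "i \<le> j \<Longrightarrow> j < length p \<Longrightarrow> last (subpath p i j) = p ! j"
  using subpath_nth[of i j p "j - i"] subpath_ne[of i j p] subpath_len[of i j p]
  by (simp add: last_conv_nth)

lemma subpath_distinct: "distinct p \<Longrightarrow> distinct (subpath p i j)"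
  by (simp add: subpath_def)

lemma links_subpath:
  assumes "i \<le> j" "j < length p"
  shows "e \<in> links (subpath p i j) \<longleftrightarrow> (\<exists>k. i \<le> k \<and> k < j \<and> e = (p ! k, p ! Suc k))"
proof
  assume "e \<in> links (subpath p i j)"
  then obtain k' where k': "Suc k' < length (subpath p i j)"
    "e = (subpath p i j ! k', subpath p i j ! Suc k')" using links_nth by metis
  then show "\<exists>k. i \<le> k \<and> k < j \<and> e = (p ! k, p ! Suc k)"
    using assms subpath_len[OF assms] subpath_nth[OF assms]
    by (intro exI[of _ "i + k'"]) auto
next
  assume "\<exists>k. i \<le> k \<and> k < j \<and> e = (p ! k, p ! Suc k)"
  then obtain k where k: "i \<le> k" "k < j" "e = (p ! k, p ! Suc k)" by blast
  have "Suc (k - i) < length (subpath p i j)" using k assms subpath_len[OF assms] by simp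
  moreover have "subpath p i j ! (k - i) = p ! k" "subpath p i j ! Suc (k - i) = p ! Suc k"
    using k assms subpath_nth[OF assms] by (simp_all add: Suc_diff_le)
  ultimately show "e \<in> links (subpath p i j)" using links_nthI k(3) by metis
qed

lemma link_idx_inj:
  assumes "distinct p" "Suc k < length p" "Suc m < length p" "(p ! k, p ! Suc k) = (p ! m, p ! Suc m)"
  shows "k = m"
  using assms nth_eq_iff_index_eq by auto

lemma simple_path_set:
  assumes "simple_path E s t x" "E \<subseteq> V \<times> V" "s \<in> V"
  shows "set x \<subseteq> V"
proof
  fix y assume "y \<in> set x"
  then obtain k where k: "k < length x" "x ! k = y" by (auto simp: in_set_conv_nth)
  show "y \<in> V"
  proof (cases k)
    case 0 then show ?thesis using assms k by (auto simp: simple_path_def hd_conv_nth)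
  next
    case (Suc m)
    then have "(x ! m, x ! Suc m) \<in> E" using links_nthI[of m x] k assms by (auto simp: simple_path_def)
    then show ?thesis using assms k Suc by auto
  qed
qed

lemma prod_sub_ge:
  fixes f :: "'a \<Rightarrow> real"
  assumes "finite C" "X \<subseteq> C" "\<forall>e\<in>C. 0 \<le> f e \<and> f e \<le> 1"
  shows "prod f C \<le> prod f X"
proof -
  have "prod f C = prod f (C - X) * prod f X"
    using assms prod.subset_diff by blast
  moreover have "prod f (C - X) \<le> 1" "0 \<le> prod f X" "0 \<le> prod f (C - X)"
    using assms by (auto intro!: prod_le_1 prod_nonneg)
  ultimately show ?thesis by (simp add: mult_left_le_one_le)
qed

lemma finite_links: "finite (links p)" by (simp add: links_def)


lemma links_subpath_sub: "i \<le> j \<Longrightarrow> j < length p \<Longrightarrow> links (subpath p i j) \<subseteq> links p"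
proof
  fix e assume "i \<le> j" "j < length p" "e \<in> links (subpath p i j)"
  then obtain k where "k < j" "e = (p ! k, p ! Suc k)" using links_subpath by blast
  then show "e \<in> links p" using links_nthI[of k p] \<open>j < length p\<close> by simp
qed

lemma improve:
  assumes wpos: "\<forall>e\<in>E. 0 < w e"
    and pfb: "\<forall>e\<in>E. 0 \<le> 1 - pf e \<and> 1 - pf e \<le> 1"
    and sp: "simple_path E s t p" and sq: "simple_path E s t q"
    and ds: "disjoint_segment p q \<sigma>1 \<sigma>2"
    and r1: "simple_path E (hd \<sigma>1) (last \<sigma>1) \<rho>1" and r2: "simple_path E (hd \<sigma>1) (last \<sigma>1) \<rho>2"
    and rd: "links \<rho>1 \<inter> links \<rho>2 = {}"
    and lt: "pair_weight w \<rho>1 \<rho>2 < pair_weight w \<sigma>1 \<sigma>2"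
  shows "\<exists>P1 P2. simple_path E s t P1 \<and> simple_path E s t P2 \<and>
    co_weight w P1 P2 < co_weight w p q \<and> surv_level pf p q \<le> surv_level pf P1 P2"
proof -
  obtain i1 j1 i2 j2 where X: "excl_run p q i1 j1" "excl_run q p i2 j2"
    "\<sigma>1 = subpath p i1 j1" "\<sigma>2 = subpath q i2 j2" "hd \<sigma>1 = hd \<sigma>2" "last \<sigma>1 = last \<sigma>2"
    using ds unfolding disjoint_segment_def by blast
  have ij1: "i1 < j1" "j1 < length p" and ij2: "i2 < j2" "j2 < length q"
    and ex1: "\<And>k. i1 \<le> k \<Longrightarrow> k < j1 \<Longrightarrow> (p ! k, p ! Suc k) \<notin> links q"
    and ex2: "\<And>k. i2 \<le> k \<Longrightarrow> k < j2 \<Longrightarrow> (q ! k, q ! Suc k) \<notin> links p"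
    using X(1,2) unfolding excl_run_def by auto
  have P: "p \<noteq> []" "hd p = s" "last p = t" "distinct p" "links p \<subseteq> E"
    and Q: "q \<noteq> []" "hd q = s" "last q = t" "distinct q" "links q \<subseteq> E"
    using sp sq by (auto simp: simple_path_def)
  define u where "u = p ! i1"
  define v where "v = p ! j1"
  have hs1: "hd \<sigma>1 = u" "last \<sigma>1 = v" using X ij1 by (simp_all add: subpath_hd subpath_last u_def v_def)
  have qu: "q ! i2 = u" "q ! j2 = v" using X ij2 hs1 by (simp_all add: subpath_hd subpath_last)
  have R1: "\<rho>1 \<noteq> []" "hd \<rho>1 = u" "last \<rho>1 = v" "distinct \<rho>1" "links \<rho>1 \<subseteq> E"
    and R2: "\<rho>2 \<noteq> []" "hd \<rho>2 = u" "last \<rho>2 = v" "distinct \<rho>2" "links \<rho>2 \<subseteq> E"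
    using r1 r2 hs1 by (auto simp: simple_path_def)
  define L where "L = links \<sigma>1 \<union> links \<sigma>2"
  define U where "U = links p \<union> links q"
  define R where "R = links \<rho>1 \<union> links \<rho>2"
  define H where "H = (U - L) \<union> R"
  define C where "C = links p \<inter> links q"
  have L1: "links \<sigma>1 \<subseteq> links p" using X(3) ij1 links_subpath_sub[of i1 j1 p] by simp
  have L2: "links \<sigma>2 \<subseteq> links q" using X(4) ij2 links_subpath_sub[of i2 j2 q] by simp
  have pin: "(p ! k, p ! Suc k) \<in> H" if "Suc k < length p" "\<not> (i1 \<le> k \<and> k < j1)" for k
  proof -
    have e: "(p ! k, p ! Suc k) \<in> links p" using links_nthI that by metis
    have "(p ! k, p ! Suc k) \<notin> links \<sigma>1"
    proof
      assume "(p ! k, p ! Suc k) \<in> links \<sigma>1"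
      then obtain m where "i1 \<le> m" "m < j1" "(p ! k, p ! Suc k) = (p ! m, p ! Suc m)"
        using X(3) ij1 links_subpath[of i1 j1 p] by auto
      then have "k = m" using link_idx_inj[OF P(4) that(1), of m] ij1 by auto
      then show False using that \<open>i1 \<le> m\<close> \<open>m < j1\<close> by auto
    qed
    moreover have "(p ! k, p ! Suc k) \<notin> links \<sigma>2"
    proof
      assume "(p ! k, p ! Suc k) \<in> links \<sigma>2"
      then obtain m where "i2 \<le> m" "m < j2" "(p ! k, p ! Suc k) = (q ! m, q ! Suc m)"
        using X(4) ij2 links_subpath[of i2 j2 q] by auto
      then show False using ex2 e by metis
    qed
    ultimately show ?thesis using e by (simp add: H_def U_def L_def)
  qed
  have qin: "(q ! k, q ! Suc k) \<in> H" if "Suc k < length q" "\<not> (i2 \<le> k \<and> k < j2)" for k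
  proof -
    have e: "(q ! k, q ! Suc k) \<in> links q" using links_nthI that by metis
    have "(q ! k, q ! Suc k) \<notin> links \<sigma>2"
    proof
      assume "(q ! k, q ! Suc k) \<in> links \<sigma>2"
      then obtain m where "i2 \<le> m" "m < j2" "(q ! k, q ! Suc k) = (q ! m, q ! Suc m)"
        using X(4) ij2 links_subpath[of i2 j2 q] by auto
      then have "k = m" using link_idx_inj[OF Q(4) that(1), of m] ij2 by auto
      then show False using that \<open>i2 \<le> m\<close> \<open>m < j2\<close> by auto
    qed
    moreover have "(q ! k, q ! Suc k) \<notin> links \<sigma>1"
    proof
      assume "(q ! k, q ! Suc k) \<in> links \<sigma>1"
      then obtain m where "i1 \<le> m" "m < j1" "(q ! k, q ! Suc k) = (p ! m, p ! Suc m)"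
        using X(3) ij1 links_subpath[of i1 j1 p] by auto
      then show False using ex1 e by metis
    qed
    ultimately show ?thesis using e by (simp add: H_def U_def L_def)
  qed
  define Ap where "Ap = subpath p 0 i1"
  define Zp where "Zp = subpath p j1 (length p - 1)"
  define Aq where "Aq = subpath q 0 i2"
  define Zq where "Zq = subpath q j2 (length q - 1)"
  have Ap: "Ap \<noteq> []" "hd Ap = s" "last Ap = u" "links Ap \<subseteq> H" "links Ap \<subseteq> links p"
  proof -
    have a: "0 \<le> i1" "i1 < length p" using ij1 by auto
    show "Ap \<noteq> []" "hd Ap = s" "last Ap = u" "links Ap \<subseteq> links p"
      using subpath_ne[OF a] subpath_hd[OF a] subpath_last[OF a] links_subpath_sub[OF a] P
      by (auto simp: Ap_def u_def hd_conv_nth)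
    show "links Ap \<subseteq> H"
    proof
      fix e assume "e \<in> links Ap"
      then obtain k where "k < i1" "e = (p ! k, p ! Suc k)" using links_subpath[OF a] Ap_def by auto
      then show "e \<in> H" using pin[of k] ij1 by auto
    qed
  qed
  have Zp: "Zp \<noteq> []" "hd Zp = v" "last Zp = t" "links Zp \<subseteq> H" "links Zp \<subseteq> links p"
  proof -
    have a: "j1 \<le> length p - 1" "length p - 1 < length p" using ij1 by auto
    show "Zp \<noteq> []" "hd Zp = v" "last Zp = t" "links Zp \<subseteq> links p"
      using subpath_ne[OF a] subpath_hd[OF a] subpath_last[OF a] links_subpath_sub[OF a] P
      by (auto simp: Zp_def v_def last_conv_nth)
    show "links Zp \<subseteq> H"
    proof
      fix e assume "e \<in> links Zp"
      then obtain k where "j1 \<le> k" "k < length p - 1" "e = (p ! k, p ! Suc k)" using links_subpath[OF a] Zp_def by auto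
      then show "e \<in> H" using pin[of k] ij1 by auto
    qed
  qed
  have Aq: "Aq \<noteq> []" "hd Aq = s" "last Aq = u" "links Aq \<subseteq> H" "links Aq \<subseteq> links q"
  proof -
    have a: "0 \<le> i2" "i2 < length q" using ij2 by auto
    show "Aq \<noteq> []" "hd Aq = s" "last Aq = u" "links Aq \<subseteq> links q"
      using subpath_ne[OF a] subpath_hd[OF a] subpath_last[OF a] links_subpath_sub[OF a] Q qu
      by (auto simp: Aq_def hd_conv_nth)
    show "links Aq \<subseteq> H"
    proof
      fix e assume "e \<in> links Aq"
      then obtain k where "k < i2" "e = (q ! k, q ! Suc k)" using links_subpath[OF a] Aq_def by auto
      then show "e \<in> H" using qin[of k] ij2 by auto
    qed
  qed
  have Zq: "Zq \<noteq> []" "hd Zq = v" "last Zq = t" "links Zq \<subseteq> H" "links Zq \<subseteq> links q"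
  proof -
    have a: "j2 \<le> length q - 1" "length q - 1 < length q" using ij2 by auto
    show "Zq \<noteq> []" "hd Zq = v" "last Zq = t" "links Zq \<subseteq> links q"
      using subpath_ne[OF a] subpath_hd[OF a] subpath_last[OF a] links_subpath_sub[OF a] Q qu
      by (auto simp: Zq_def last_conv_nth)
    show "links Zq \<subseteq> H"
    proof
      fix e assume "e \<in> links Zq"
      then obtain k where "j2 \<le> k" "k < length q - 1" "e = (q ! k, q ! Suc k)" using links_subpath[OF a] Zq_def by auto
      then show "e \<in> H" using qin[of k] ij2 by auto
    qed
  qed
  have RH: "links \<rho>1 \<subseteq> H" "links \<rho>2 \<subseteq> H" by (auto simp: H_def R_def)
  have pair: "(\<exists>e\<in>H \<inter> C. fst e \<in> S \<and> snd e \<notin> S) \<or>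
      (\<exists>e\<in>H. \<exists>e'\<in>H. e \<noteq> e' \<and> fst e \<in> S \<and> snd e \<notin> S \<and> fst e' \<in> S \<and> snd e' \<notin> S)"
    if x1: "x1 \<noteq> []" "hd x1 \<in> S" "last x1 \<notin> S" "links x1 \<subseteq> H"
      and x2: "x2 \<noteq> []" "hd x2 \<in> S" "last x2 \<notin> S" "links x2 \<subseteq> H"
      and ov: "links x1 \<inter> links x2 \<subseteq> C"
    for x1 x2 S
  proof -
    obtain e1 where e1: "e1 \<in> links x1" "fst e1 \<in> S" "snd e1 \<notin> S" using leave_link[OF x1(1-3)] by blast
    obtain e2 where e2: "e2 \<in> links x2" "fst e2 \<in> S" "snd e2 \<notin> S" using leave_link[OF x2(1-3)] by blast
    show ?thesis
    proof (cases "e1 = e2")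
      case True then show ?thesis using e1 e2 ov x1 by blast
    next
      case False then show ?thesis using e1 e2 x1 x2 by blast
    qed
  qed
  have cut: "\<forall>S. s \<in> S \<and> t \<notin> S \<longrightarrow> (\<exists>e\<in>H \<inter> C. fst e \<in> S \<and> snd e \<notin> S) \<or>
      (\<exists>e\<in>H. \<exists>e'\<in>H. e \<noteq> e' \<and> fst e \<in> S \<and> snd e \<notin> S \<and> fst e' \<in> S \<and> snd e' \<notin> S)"
  proof (intro allI impI)
    fix S assume S: "s \<in> S \<and> t \<notin> S"
    consider "u \<in> S" "v \<notin> S" | "v \<in> S" | "u \<notin> S" by blast
    then show "(\<exists>e\<in>H \<inter> C. fst e \<in> S \<and> snd e \<notin> S) \<or>
      (\<exists>e\<in>H. \<exists>e'\<in>H. e \<noteq> e' \<and> fst e \<in> S \<and> snd e \<notin> S \<and> fst e' \<in> S \<and> snd e' \<notin> S)"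
    proof cases
      case 1 then show ?thesis using pair[of \<rho>1 S \<rho>2] R1 R2 RH rd by auto
    next
      case 2
      have "links Zp \<inter> links Zq \<subseteq> C" using Zp Zq by (auto simp: C_def)
      then show ?thesis using pair[of Zp S Zq] Zp Zq S 2 by auto
    next
      case 3
      have "links Ap \<inter> links Aq \<subseteq> C" using Ap Aq by (auto simp: C_def)
      then show ?thesis using pair[of Ap S Aq] Ap Aq S 3 by auto
    qed
  qed
  obtain P1 P2 where N: "P1 \<noteq> []" "hd P1 = s" "last P1 = t" "distinct P1" "links P1 \<subseteq> H"
     "P2 \<noteq> []" "hd P2 = s" "last P2 = t" "distinct P2" "links P2 \<subseteq> H" "links P1 \<inter> links P2 \<subseteq> C"
    using menger2[OF cut] by blast
  have HE: "H \<subseteq> E" using P Q R1 R2 by (auto simp: H_def U_def R_def)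
  have finH: "finite H" "finite U" "finite L" "finite R" "finite C"
    by (auto simp: H_def U_def L_def R_def C_def finite_links)
  have nn: "\<forall>e\<in>H. 0 \<le> w e" "\<forall>e\<in>U. 0 \<le> w e" "\<forall>e\<in>R. 0 \<le> w e"
    using HE wpos P Q R1 R2 by (force simp: U_def R_def)+
  have LU: "L \<subseteq> U" using L1 L2 by (auto simp: L_def U_def)
  have "sum w H = sum w (U - L) + sum w R - sum w ((U - L) \<inter> R)"
    unfolding H_def using finH by (intro sum_Un) auto
  also have "\<dots> \<le> sum w (U - L) + sum w R"
  proof -
    have "0 \<le> sum w ((U - L) \<inter> R)" by (rule sum_nonneg) (use nn(3) in blast)
    then show ?thesis by linarith
  qed
  also have "sum w (U - L) = sum w U - sum w L" using finH LU by (simp add: sum_diff)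
  finally have "sum w H \<le> sum w U - sum w L + sum w R" .
  moreover have "sum w L = pair_weight w \<sigma>1 \<sigma>2" "sum w R = pair_weight w \<rho>1 \<rho>2"
    by (simp_all add: L_def R_def pair_weight_def)
  ultimately have Hlt: "sum w H < co_weight w p q" using lt by (simp add: co_weight_def U_def)
  have "co_weight w P1 P2 \<le> sum w H"
    unfolding co_weight_def using N nn finH by (intro sum_mono2) auto
  with Hlt have cw: "co_weight w P1 P2 < co_weight w p q" by simp
  have CE: "C \<subseteq> E" using P by (auto simp: C_def)
  have sv: "surv_level pf p q \<le> surv_level pf P1 P2"
    unfolding surv_level_def using prod_sub_ge[OF finH(5) N(11), of "\<lambda>e. 1 - pf e"] CE pfb
    by (auto simp: C_def)
  have "simple_path E s t P1" "simple_path E s t P2"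
    using N HE by (auto simp: simple_path_def)
  then show ?thesis using cw sv by blast
qed


theorem lemma6:
  fixes V :: "'v set" and E :: "('v \<times> 'v) set"
    and pf w :: "'v \<times> 'v \<Rightarrow> real" and pmax B :: real and s t :: 'v
  assumes "finite V" and "E \<subseteq> V \<times> V" and "s \<in> V" and "t \<in> V"
    and "pmax < 1"
    and "\<forall>e\<in>E. 0 < pf e \<and> pf e \<le> pmax"
    and "\<forall>e\<in>E. 0 < w e"
    and "B \<ge> 0"
    and "\<exists>\<pi>1 \<pi>2. feasible_conn E w B s t \<pi>1 \<pi>2"
  shows "\<exists>\<pi>1 \<pi>2. optimal_conn E pf w B s t \<pi>1 \<pi>2 \<and>
           (\<forall>\<sigma>1 \<sigma>2. disjoint_segment \<pi>1 \<pi>2 \<sigma>1 \<sigma>2 \<longrightarrow> shortest_disjoint_segment E w \<sigma>1 \<sigma>2)"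
proof -
  define Paths where "Paths = {x. simple_path E s t x}"
  have "Paths \<subseteq> {xs. set xs \<subseteq> V \<and> distinct xs}"
    using simple_path_set[OF _ assms(2,3)] by (auto simp: Paths_def simple_path_def)
  then have finP: "finite Paths" using finite_subset_distinct[OF assms(1)] finite_subset by blast
  define Feas where "Feas = {(a, b). feasible_conn E w B s t a b}"
  have "Feas \<subseteq> Paths \<times> Paths" by (auto simp: Feas_def Paths_def feasible_conn_def)
  then have finF: "finite Feas" using finP finite_subset by blast
  have neF: "Feas \<noteq> {}" using assms(9) by (auto simp: Feas_def)
  define sv where "sv = (\<lambda>(a, b). surv_level pf a b)"
  define best where "best = Max (sv ` Feas)"
  define Opt where "Opt = {x\<in>Feas. sv x = best}"
  have "best \<in> sv ` Feas" unfolding best_def using finF neF by (intro Max_in) auto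
  then have neO: "Opt \<noteq> {}" by (auto simp: Opt_def)
  have finO: "finite Opt" using finF by (simp add: Opt_def)
  define cw where "cw = (\<lambda>(a, b). co_weight w a b)"
  define m where "m = Min (cw ` Opt)"
  have "m \<in> cw ` Opt" unfolding m_def using finO neO by (intro Min_in) auto
  then obtain p q where pq: "(p, q) \<in> Opt" "cw (p, q) = m" by auto
  have mle: "m \<le> cw y" if "y \<in> Opt" for y unfolding m_def using finO that by simp
  have bestge: "sv y \<le> best" if "y \<in> Feas" for y unfolding best_def using finF that by simp
  have feas: "feasible_conn E w B s t p q" and svpq: "sv (p, q) = best"
    using pq by (auto simp: Opt_def Feas_def)
  have opt: "optimal_conn E pf w B s t p q"
    unfolding optimal_conn_def using feas svpq bestge by (auto simp: Feas_def sv_def)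
  have pfb: "\<forall>e\<in>E. 0 \<le> 1 - pf e \<and> 1 - pf e \<le> 1" using assms(5,6) by fastforce
  have "shortest_disjoint_segment E w \<sigma>1 \<sigma>2" if ds: "disjoint_segment p q \<sigma>1 \<sigma>2" for \<sigma>1 \<sigma>2
    unfolding shortest_disjoint_segment_def
  proof (intro allI impI)
    fix \<rho>1 \<rho>2
    assume r: "simple_path E (hd \<sigma>1) (last \<sigma>1) \<rho>1 \<and> simple_path E (hd \<sigma>1) (last \<sigma>1) \<rho>2 \<and>
      links \<rho>1 \<inter> links \<rho>2 = {}"
    show "pair_weight w \<sigma>1 \<sigma>2 \<le> pair_weight w \<rho>1 \<rho>2"
    proof (rule ccontr)
      assume "\<not> ?thesis"
      then have lt: "pair_weight w \<rho>1 \<rho>2 < pair_weight w \<sigma>1 \<sigma>2" by simp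
      obtain P1 P2 where N: "simple_path E s t P1" "simple_path E s t P2"
        "co_weight w P1 P2 < co_weight w p q" "surv_level pf p q \<le> surv_level pf P1 P2"
      proof -
        have f1: "simple_path E s t p" "simple_path E s t q" using feas by (auto simp: feasible_conn_def)
        show ?thesis using improve[OF assms(7) pfb f1 ds conjunct1[OF r] conjunct1[OF conjunct2[OF r]] conjunct2[OF conjunct2[OF r]] lt] that by blast
      qed
      have "feasible_conn E w B s t P1 P2" using N feas by (auto simp: feasible_conn_def)
      then have F: "(P1, P2) \<in> Feas" by (simp add: Feas_def)
      then have "(P1, P2) \<in> Opt" using bestge[OF F] svpq N(4) by (auto simp: Opt_def sv_def)
      from mle[OF this] pq(2) N(3) show False by (simp add: cw_def)
    qed
  qed
  then show ?thesis using opt by blast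
qed

end
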